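(* Let $A$ be a synaptic algebra, let $p,q\in P$ be in generic position ($p\wedge q=p\wedge q^{\perp}=p^{\perp}\wedge q=p^{\perp}\wedge q^{\perp}=0$), and let $c:=(pqp+p^{\perp}q^{\perp}p^{\perp})^{1/2}$. Then the spectrum of $p+q$ is $\sigma(p+q)=\{1\pm\gamma:\gamma\in\sigma(c)\}$.
   Context: Synaptic algebra (Foulis): $R$ is a real linear associative algebra with unit $1$, and $A\subseteq R$ is a real linear subspace with $1\in A$. For $a,b\in A$ write $aCb$ iff $ab=ba$; $C(a):=\{b\in A: aCb\}$; $CC(a):=\{b\in A: bCd \text{ for all } d\in C(a)\}$. $A$ is a synaptic algebra with enveloping algebra $R$ iff: (SA1) $A$ is a partially ordered archimedean real linear space with positive cone $A^+$, $1$ is an order unit, $\|\cdot\|$ the order-unit norm; (SA2) $a\in A\Rightarrow a^2\in A^+$; (SA3) $a,b\in A^+\Rightarrow aba\in A^+$; (SA4) if $a\in A$, $b\in A^+$, $aba=0$ then $ab=ba=0$; (SA5) if $a\in A^+$ there is $b\in A^+\cap CC(a)$ with $b^2=a$; (SA6) for $a\in A$ there is $p=p^2\in A$ with $ab=0\Leftrightarrow pb=0$ for all $b\in A$; (SA7) if $1\le a$ there is $b\in A$ with $ab=ba=1$; (SA8) if $a,b\in A$, $a_1\le a_2\le\cdots$ are pairwise commuting elements of $C(b)$ with $\|a-a_n\|\to0$, then $a\in C(b)$. $A$ is nondegenerate. $P:=\{p\in A:p=p^2\}$ with inherited order is an orthomodular lattice with $p^{\perp}:=1-p$, meet $\wedge$,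 join $\vee$. For $0\le a$, $a^{1/2}$ is its unique positive square root in $A$. Real numbers $\lambda$ are identified with $\lambda1\in A$. The spectrum of $a\in A$ is $\sigma(a):=\{\lambda\in\mathbb{R}: a-\lambda \text{ is not invertible}\}$, where $b\in A$ is invertible iff there is $d\in A$ with $bd=db=1$. *)

theory Defs
  imports Complex_Main
begin

text \<open>The enveloping algebra R is a type of class real_algebra_1 (real linear
associative algebra with unit). A synaptic algebra is a subset A of R together
with its positive cone Pos.\<close>

definition sa_le :: "'a::real_algebra_1 set \<Rightarrow> 'a \<Rightarrow> 'a \<Rightarrow> bool" where
  "sa_le Pos a b \<longleftrightarrow> b - a \<in> Pos"

definition sa_commutant :: "'a::real_algebra_1 set \<Rightarrow> 'a \<Rightarrow> 'a set" where
  "sa_commutant A a = {b \<in> A. a * b = b * a}"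

definition sa_bicommutant :: "'a::real_algebra_1 set \<Rightarrow> 'a \<Rightarrow> 'a set" where
  "sa_bicommutant A a = {b \<in> A. \<forall>d \<in> sa_commutant A a. b * d = d * b}"

definition sa_norm :: "'a::real_algebra_1 set \<Rightarrow> 'a \<Rightarrow> real" where
  "sa_norm Pos a = Inf {l::real. 0 < l \<and> sa_le Pos (- (l *\<^sub>R 1)) a \<and> sa_le Pos a (l *\<^sub>R 1)}"

definition synaptic_algebra :: "'a::real_algebra_1 set \<Rightarrow> 'a set \<Rightarrow> bool" where
  "synaptic_algebra A Pos \<longleftrightarrow>
    \<comment> \<open>A is a real linear subspace containing 1; nondegenerate\<close>
    1 \<in> A \<and> 0 \<in> A \<and> (\<forall>a\<in>A. \<forall>b\<in>A. a + b \<in> A) \<and> (\<forall>a\<in>A. \<forall>r::real. r *\<^sub>R a \<in> A) \<and>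
    (0::'a) \<noteq> 1 \<and>
    \<comment> \<open>SA1: partially ordered archimedean space, positive cone Pos, 1 an order unit\<close>
    Pos \<subseteq> A \<and> 0 \<in> Pos \<and> (\<forall>a\<in>Pos. \<forall>b\<in>Pos. a + b \<in> Pos) \<and>
    (\<forall>a\<in>Pos. \<forall>r::real. 0 \<le> r \<longrightarrow> r *\<^sub>R a \<in> Pos) \<and>
    (\<forall>a\<in>Pos. - a \<in> Pos \<longrightarrow> a = 0) \<and>
    (\<forall>a\<in>A. \<exists>l::real. sa_le Pos a (l *\<^sub>R 1)) \<and>
    (\<forall>a\<in>A. \<forall>b\<in>A. (\<forall>n::nat. sa_le Pos (of_nat n *\<^sub>R a) b) \<longrightarrow> sa_le Pos a 0) \<and>
    \<comment> \<open>SA2\<close>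
    (\<forall>a\<in>A. a * a \<in> Pos) \<and>
    \<comment> \<open>SA3\<close>
    (\<forall>a\<in>Pos. \<forall>b\<in>Pos. a * b * a \<in> Pos) \<and>
    \<comment> \<open>SA4\<close>
    (\<forall>a\<in>A. \<forall>b\<in>Pos. a * b * a = 0 \<longrightarrow> a * b = 0 \<and> b * a = 0) \<and>
    \<comment> \<open>SA5\<close>
    (\<forall>a\<in>Pos. \<exists>b\<in>Pos \<inter> sa_bicommutant A a. b * b = a) \<and>
    \<comment> \<open>SA6\<close>
    (\<forall>a\<in>A. \<exists>p\<in>A. p * p = p \<and> (\<forall>b\<in>A. a * b = 0 \<longleftrightarrow> p * b = 0)) \<and>
    \<comment> \<open>SA7\<close>
    (\<forall>a\<in>A. sa_le Pos 1 a \<longrightarrow> (\<exists>b\<in>A. a * b = 1 \<and> b * a = 1)) \<and>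
    \<comment> \<open>SA8\<close>
    (\<forall>a\<in>A. \<forall>b\<in>A. \<forall>s::nat \<Rightarrow> 'a.
       (\<forall>n. s n \<in> sa_commutant A b) \<and> (\<forall>m n. s m * s n = s n * s m) \<and>
       (\<forall>n. sa_le Pos (s n) (s (Suc n))) \<and>
       ((\<lambda>n. sa_norm Pos (a - s n)) \<longlonglongrightarrow> 0)
       \<longrightarrow> a \<in> sa_commutant A b)"

definition sa_proj :: "'a::real_algebra_1 set \<Rightarrow> 'a set" where
  "sa_proj A = {p \<in> A. p * p = p}"

definition sa_is_meet :: "'a::real_algebra_1 set \<Rightarrow> 'a set \<Rightarrow> 'a \<Rightarrow> 'a \<Rightarrow> 'a \<Rightarrow> bool" where
  "sa_is_meet A Pos p q m \<longleftrightarrow> m \<in> sa_proj A \<and> sa_le Pos m p \<and> sa_le Pos m q \<and>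
     (\<forall>r\<in>sa_proj A. sa_le Pos r p \<and> sa_le Pos r q \<longrightarrow> sa_le Pos r m)"

definition sa_sqrt :: "'a::real_algebra_1 set \<Rightarrow> 'a \<Rightarrow> 'a" where
  "sa_sqrt Pos a = (THE b. b \<in> Pos \<and> b * b = a)"

definition sa_invertible :: "'a::real_algebra_1 set \<Rightarrow> 'a \<Rightarrow> bool" where
  "sa_invertible A b \<longleftrightarrow> (\<exists>d\<in>A. b * d = 1 \<and> d * b = 1)"

definition sa_spectrum :: "'a::real_algebra_1 set \<Rightarrow> 'a \<Rightarrow> real set" where
  "sa_spectrum A a = {l::real. \<not> sa_invertible A (a - l *\<^sub>R 1)}"

end

theory Submission
  imports Defs
begin

locale SA =
  fixes A Pos :: "'a::real_algebra_1 set"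
  assumes sa: "synaptic_algebra A Pos"
begin

lemma one_A: "1 \<in> A" using sa unfolding synaptic_algebra_def by auto
lemma zero_A: "0 \<in> A" using sa unfolding synaptic_algebra_def by auto
lemma add_A: "a \<in> A \<Longrightarrow> b \<in> A \<Longrightarrow> a + b \<in> A" using sa unfolding synaptic_algebra_def by auto
lemma scale_A: "a \<in> A \<Longrightarrow> r *\<^sub>R a \<in> A" using sa unfolding synaptic_algebra_def by auto
lemma nondeg: "(0::'a) \<noteq> 1" using sa unfolding synaptic_algebra_def by auto
lemma PosA: "x \<in> Pos \<Longrightarrow> x \<in> A" using sa unfolding synaptic_algebra_def by auto
lemma pos_add: "a \<in> Pos \<Longrightarrow> b \<in> Pos \<Longrightarrow> a + b \<in> Pos" using sa unfolding synaptic_algebra_def by auto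
lemma pos_scale: "a \<in> Pos \<Longrightarrow> 0 \<le> r \<Longrightarrow> r *\<^sub>R a \<in> Pos" using sa unfolding synaptic_algebra_def by auto
lemma pos_antisym: "a \<in> Pos \<Longrightarrow> - a \<in> Pos \<Longrightarrow> a = 0" using sa unfolding synaptic_algebra_def by auto
lemma order_unit: "a \<in> A \<Longrightarrow> \<exists>l::real. (l *\<^sub>R 1) - a \<in> Pos" using sa unfolding synaptic_algebra_def sa_le_def by auto
lemma sq_Pos: "a \<in> A \<Longrightarrow> a * a \<in> Pos" using sa unfolding synaptic_algebra_def by auto
lemma SA3: "a \<in> Pos \<Longrightarrow> b \<in> Pos \<Longrightarrow> a * b * a \<in> Pos" using sa unfolding synaptic_algebra_def by auto
lemma SA4: "a \<in> A \<Longrightarrow> b \<in> Pos \<Longrightarrow> a * b * a = 0 \<Longrightarrow> a * b = 0 \<and> b * a = 0" using sa unfolding synaptic_algebra_def by blast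
lemma SA5: "a \<in> Pos \<Longrightarrow> \<exists>b\<in>Pos \<inter> sa_bicommutant A a. b * b = a" using sa unfolding synaptic_algebra_def by blast
lemma SA6: "a \<in> A \<Longrightarrow> \<exists>p\<in>A. p * p = p \<and> (\<forall>b\<in>A. a * b = 0 \<longleftrightarrow> p * b = 0)" using sa unfolding synaptic_algebra_def by blast
lemma SA7: "a \<in> A \<Longrightarrow> a - 1 \<in> Pos \<Longrightarrow> \<exists>b\<in>A. a * b = 1 \<and> b * a = 1" using sa unfolding synaptic_algebra_def sa_le_def by blast

lemma neg_A: "a \<in> A \<Longrightarrow> - a \<in> A"
  using scale_A[of a "-1"] by simp
lemma diff_A: "a \<in> A \<Longrightarrow> b \<in> A \<Longrightarrow> a - b \<in> A"
  using add_A[of a "-b"] neg_A by simp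
lemma sc_A: "r *\<^sub>R 1 \<in> A" using scale_A one_A by blast
lemma one_Pos: "1 \<in> Pos" using sq_Pos[OF one_A] by simp
lemma pos_scale_sym: "a \<in> Pos \<Longrightarrow> 0 < r \<Longrightarrow> r *\<^sub>R a \<in> Pos"
  using pos_scale by simp

lemma jordan_A: assumes "a \<in> A" "b \<in> A" shows "a * b + b * a \<in> A"
proof -
  have "(a + b) * (a + b) - a * a - b * b \<in> A"
    using assms by (meson diff_A add_A PosA sq_Pos)
  moreover have "(a + b) * (a + b) - a * a - b * b = a * b + b * a"
    by (simp add: algebra_simps)
  ultimately show ?thesis by simp
qed

lemma comm_A: assumes "a \<in> A" "b \<in> A" "a * b = b * a" shows "a * b \<in> A"
proof -
  have "(1/2::real) *\<^sub>R (a * b + b * a) \<in> A" using jordan_A[OF assms(1,2)] scale_A by blast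
  moreover have "(1/2::real) *\<^sub>R (a * b + b * a) = a * b" using assms(3)
    by (simp add: scaleR_add_right[symmetric] del: scaleR_add_right)
  ultimately show ?thesis by simp
qed

lemma triple_A: assumes "a \<in> A" "b \<in> A" shows "a * b * a \<in> A"
proof -
  have j1: "a * b + b * a \<in> A" using jordan_A assms by blast
  have j2: "a * (a * b + b * a) + (a * b + b * a) * a \<in> A" using jordan_A[OF assms(1) j1] .
  have j3: "(a * a) * b + b * (a * a) \<in> A" using jordan_A[OF PosA[OF sq_Pos[OF assms(1)]] assms(2)] .
  have "(1/2::real) *\<^sub>R ((a * (a * b + b * a) + (a * b + b * a) * a) - ((a * a) * b + b * (a * a))) \<in> A"
    using j2 j3 diff_A scale_A by blast
  moreover have "(a * (a * b + b * a) + (a * b + b * a) * a) - ((a * a) * b + b * (a * a)) = 2 *\<^sub>R (a * b * a)"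
    by (simp add: algebra_simps scaleR_2)
  ultimately show ?thesis by simp
qed

lemma sq_zero: assumes "a \<in> A" "a * a = 0" shows "a = 0"
  using SA4[OF assms(1) one_Pos] assms(2) by simp

lemma conj_comm: assumes "a \<in> A" "x \<in> Pos" "a * x = x * a" shows "a * x * a \<in> Pos"
proof -
  obtain s where s: "s \<in> Pos" "s \<in> sa_bicommutant A x" "s * s = x" using SA5[OF assms(2)] by blast
  have "a \<in> sa_commutant A x" using assms unfolding sa_commutant_def by auto
  hence sa: "s * a = a * s" using s(2) unfolding sa_bicommutant_def by auto
  have "a * x * a = s * (a * a) * s"
  proof -
    have "s * (a * a) * s = (s * a) * (a * s)" by (simp add: mult.assoc)
    also have "\<dots> = a * (s * s) * a" using sa by (simp add: mult.assoc)
    finally show ?thesis using s(3) by simp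
  qed
  thus ?thesis using SA3[OF s(1) sq_Pos[OF assms(1)]] by simp
qed

lemma sqrt_unique_aux:
  assumes a: "a \<in> Pos" and x: "x \<in> Pos" "x * x = a"
    and r: "r \<in> Pos" "r \<in> sa_bicommutant A a" "r * r = a"
  shows "x = r"
proof -
  have xA: "x \<in> A" and rA: "r \<in> A" using x r PosA by auto
  have "x \<in> sa_commutant A a" using xA x(2) unfolding sa_commutant_def by (auto simp: mult.assoc)
  hence xr: "x * r = r * x" using r(2) unfolding sa_bicommutant_def by auto
  define d where "d = x - r"
  have dA: "d \<in> A" using xA rA diff_A d_def by blast
  have dx: "d * x = x * d" unfolding d_def using xr by (simp add: algebra_simps)
  have dr: "d * r = r * d" unfolding d_def using xr by (simp add: algebra_simps)
  have p1: "d * x * d \<in> Pos" using conj_comm[OF dA x(1) dx] .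
  have p2: "d * r * d \<in> Pos" using conj_comm[OF dA r(1) dr] .
  have "d * x * d + d * r * d = d * (x + r) * d" by (simp add: algebra_simps)
  also have "d * (x + r) = x * x - r * r" unfolding d_def using xr by (simp add: algebra_simps)
  also have "\<dots> = 0" using x r by simp
  finally have s0: "d * x * d + d * r * d = 0" by simp
  hence "d * x * d = - (d * r * d)" by (simp add: eq_neg_iff_add_eq_0)
  hence z1: "d * x * d = 0" using p1 p2 pos_antisym by (metis minus_minus)
  hence z2: "d * r * d = 0" using s0 by simp
  have "d * x = 0" using SA4[OF dA x(1) z1] by simp
  moreover have "d * r = 0" using SA4[OF dA r(1) z2] by simp
  ultimately have "d * d = 0"
  proof -
    assume "d * x = 0" "d * r = 0"
    have "d * d = d * (x - r)" using d_def by simp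
    also have "\<dots> = d * x - d * r" by (simp add: right_diff_distrib)
    finally show ?thesis using \<open>d * x = 0\<close> \<open>d * r = 0\<close> by simp
  qed
  hence "d = 0" using sq_zero dA by blast
  thus ?thesis unfolding d_def by simp
qed

lemma sqrt_prop:
  assumes a: "a \<in> Pos"
  shows "sa_sqrt Pos a \<in> Pos" "sa_sqrt Pos a * sa_sqrt Pos a = a" "sa_sqrt Pos a \<in> sa_bicommutant A a"
proof -
  obtain r where r: "r \<in> Pos" "r \<in> sa_bicommutant A a" "r * r = a" using SA5[OF a] by blast
  have "sa_sqrt Pos a = r" unfolding sa_sqrt_def
    apply (rule the_equality)
    using r apply simp
    using sqrt_unique_aux[OF a _ _ r] by blast
  thus "sa_sqrt Pos a \<in> Pos" "sa_sqrt Pos a * sa_sqrt Pos a = a" "sa_sqrt Pos a \<in> sa_bicommutant A a"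
    using r by auto
qed

lemma inv_comm:
  fixes b w y :: 'a
  assumes "b * w = 1" "w * b = 1" "y * b = b * y" shows "y * w = w * y"
proof -
  have "y * w = (w * b) * y * w" using assms(2) by simp
  also have "\<dots> = w * (b * y) * w" by (simp only: mult.assoc)
  also have "\<dots> = w * (y * b) * w" using assms(3) by simp
  also have "\<dots> = w * y * (b * w)" by (simp only: mult.assoc)
  also have "\<dots> = w * y" using assms(1) by simp
  finally show ?thesis .
qed

lemma prod_inv:
  assumes u: "u \<in> A" and v: "v \<in> A" and uv: "u * v = v * u"
  shows "sa_invertible A (u * v) \<longleftrightarrow> sa_invertible A u \<and> sa_invertible A v"
proof
  assume "sa_invertible A (u * v)"
  then obtain z where z: "z \<in> A" "u * v * z = 1" "z * (u * v) = 1" unfolding sa_invertible_def by blast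
  have "u * (u * v) = (u * v) * u"
  proof -
    have "u * (u * v) = u * (v * u)" using uv by simp
    thus ?thesis by (simp add: mult.assoc)
  qed
  hence zu: "z * u = u * z"
    using inv_comm[OF z(2) z(3), of u] by simp
  have "v * (u * v) = (u * v) * v"
  proof -
    have "v * (u * v) = (v * u) * v" by (simp add: mult.assoc)
    thus ?thesis using uv by simp
  qed
  hence zv: "z * v = v * z"
    using inv_comm[OF z(2) z(3), of v] by simp
  have "v * z \<in> A" using comm_A[OF v z(1)] zv by simp
  moreover have "u * (v * z) = 1" using z(2) by (simp add: mult.assoc)
  moreover have "(v * z) * u = 1"
  proof -
    have "(v * z) * u = (v * u) * z" using zu by (simp add: mult.assoc)
    thus ?thesis using uv z(2) by simp
  qed
  ultimately have iu: "sa_invertible A u" unfolding sa_invertible_def by blast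
  have "u * z \<in> A" using comm_A[OF u z(1)] zu by simp
  moreover have "v * (u * z) = 1"
  proof -
    have "v * (u * z) = (v * u) * z" by (simp add: mult.assoc)
    thus ?thesis using uv z(2) by simp
  qed
  moreover have "(u * z) * v = 1"
  proof -
    have "(u * z) * v = u * v * z" using zv by (simp add: mult.assoc)
    thus ?thesis using z(2) by simp
  qed
  ultimately have iv: "sa_invertible A v" unfolding sa_invertible_def by blast
  show "sa_invertible A u \<and> sa_invertible A v" using iu iv by blast
next
  assume "sa_invertible A u \<and> sa_invertible A v"
  then obtain a b where a: "a \<in> A" "u * a = 1" "a * u = 1" and b: "b \<in> A" "v * b = 1" "b * v = 1"
    unfolding sa_invertible_def by blast
  have av: "v * a = a * v" using inv_comm[OF a(2) a(3), of v] uv by simp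
  have bu: "b * u = u * b" using inv_comm[OF b(2) b(3), of u] uv by simp
  have ab: "a * b = b * a" using inv_comm[OF b(2) b(3), of a] av by simp
  have "b * a \<in> A" using comm_A[OF b(1) a(1)] ab by simp
  moreover have "u * v * (b * a) = 1"
  proof -
    have "u * v * (b * a) = u * (v * b) * a" by (simp add: mult.assoc)
    thus ?thesis using a(2) b(2) by simp
  qed
  moreover have "(b * a) * (u * v) = 1"
  proof -
    have "(b * a) * (u * v) = b * (a * u) * v" by (simp add: mult.assoc)
    thus ?thesis using a(3) b(3) by simp
  qed
  ultimately show "sa_invertible A (u * v)" unfolding sa_invertible_def by blast
qed

lemma neg_inv: "sa_invertible A u \<Longrightarrow> sa_invertible A (- u)"
proof -
  assume "sa_invertible A u"
  then obtain w where w: "w \<in> A" "u * w = 1" "w * u = 1" unfolding sa_invertible_def by blast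
  have "- w \<in> A" using neg_A w by blast
  moreover have "(- u) * (- w) = 1" "(- w) * (- u) = 1" using w by simp_all
  ultimately show ?thesis unfolding sa_invertible_def by blast
qed

lemma bdd_below_inv:
  assumes "a \<in> A" "0 < e" "a - e *\<^sub>R 1 \<in> Pos" shows "sa_invertible A a"
proof -
  have "(1/e) *\<^sub>R (a - e *\<^sub>R 1) \<in> Pos" using pos_scale_sym assms by simp
  hence "(1/e) *\<^sub>R a - 1 \<in> Pos" using assms(2) by (simp add: scaleR_diff_right)
  then obtain b where b: "b \<in> A" "(1/e) *\<^sub>R a * b = 1" "b * ((1/e) *\<^sub>R a) = 1"
    using SA7[OF scale_A[OF assms(1)]] by blast
  have "(1/e) *\<^sub>R b \<in> A" using scale_A b by blast
  moreover have "a * ((1/e) *\<^sub>R b) = 1" using b(2) by simp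
  moreover have "((1/e) *\<^sub>R b) * a = 1" using b(3) by simp
  ultimately show ?thesis unfolding sa_invertible_def by blast
qed

lemma pos_inv_bdd:
  assumes a: "a \<in> Pos" and inv: "sa_invertible A a" shows "\<exists>e>0. a - e *\<^sub>R 1 \<in> Pos"
proof -
  obtain w where w: "w \<in> A" "a * w = 1" "w * a = 1" using inv unfolding sa_invertible_def by blast
  have aA: "a \<in> A" using a PosA by blast
  obtain s where s: "s \<in> Pos" "s \<in> sa_bicommutant A a" "s * s = a" using SA5[OF a] by blast
  have "w \<in> sa_commutant A a" using w unfolding sa_commutant_def by simp
  hence sw: "s * w = w * s" using s(2) unfolding sa_bicommutant_def by auto
  have "w * a * w = s * (w * w) * s"
  proof -
    have "s * (w * w) * s = (s * w) * (w * s)" by (simp add: mult.assoc)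
    also have "\<dots> = w * (s * s) * w" using sw by (simp add: mult.assoc)
    finally show ?thesis using s(3) by simp
  qed
  hence "w * a * w \<in> Pos" using SA3[OF s(1) sq_Pos[OF w(1)]] by simp
  hence wP: "w \<in> Pos" using w(3) by simp
  obtain l where l: "l *\<^sub>R 1 - w \<in> Pos" using order_unit[OF w(1)] by blast
  have "s * (l *\<^sub>R 1 - w) * s \<in> Pos" using SA3[OF s(1) l] .
  moreover have "s * (l *\<^sub>R 1 - w) * s = l *\<^sub>R a - 1"
  proof -
    have "s * (l *\<^sub>R 1 - w) * s = l *\<^sub>R (s * s) - s * w * s" by (simp add: algebra_simps)
    also have "s * w * s = w * (s * s)" using sw by (simp add: mult.assoc[symmetric])
    finally show ?thesis using s(3) w(3) by simp
  qed
  ultimately have la: "l *\<^sub>R a - 1 \<in> Pos" by simp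
  have lpos: "l > 0"
  proof (rule ccontr)
    assume "\<not> l > 0"
    hence "(- l) *\<^sub>R a \<in> Pos" using pos_scale[OF a, of "-l"] by simp
    hence "(l *\<^sub>R a - 1) + (- l) *\<^sub>R a \<in> Pos" using pos_add la by blast
    hence "- 1 \<in> Pos" by simp
    hence "(1::'a) = 0" using pos_antisym one_Pos by blast
    thus False using nondeg by simp
  qed
  have "(1/l) *\<^sub>R (l *\<^sub>R a - 1) \<in> Pos" using pos_scale_sym[OF la] lpos by simp
  hence "a - (1/l) *\<^sub>R 1 \<in> Pos" using lpos by (simp add: scaleR_diff_right)
  thus ?thesis using lpos by (intro exI[of _ "1/l"]) simp
qed

lemma lcomm: fixes a b :: 'a shows "a * b = b * a \<Longrightarrow> a * (b * z) = b * (a * z)"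
  by (metis mult.assoc)

lemma aux_Pv:
  assumes P: "P \<in> A" "P * P = P" and v: "v \<in> A" and y: "y \<in> A" and r: "r \<in> Pos"
    and vP: "v * P = P * v" and yP: "y * P = P * y" and rP: "r * P = P * r"
    and rv: "r * v = v * r" and vv: "v * v = 2 *\<^sub>R (r * v)" and vy: "y * v = - ((1/2) *\<^sub>R (v * v))"
    and vyc: "v * y = y * v"
    and e: "0 < e" and z: "P * y * P - e *\<^sub>R P \<in> Pos"
  shows "P * v = 0"
proof -
  have vP': "v * (P * w) = P * (v * w)" for w using lcomm[OF vP] .
  have yP': "y * (P * w) = P * (y * w)" for w using lcomm[OF yP] .
  have rP': "r * (P * w) = P * (r * w)" for w using lcomm[OF rP] .
  have PP': "P * (P * w) = P * w" for w using P(2) by (metis mult.assoc)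
  have yv': "y * (v * w) = - ((1/2) *\<^sub>R (v * (v * w)))" for w
    using vy by (metis mult.assoc mult_minus_left mult_scaleR_left)
  have vy': "v * (y * w) = - ((1/2) *\<^sub>R (v * (v * w)))" for w
    using vy vyc by (metis mult.assoc mult_minus_left mult_scaleR_left)
  have vv': "v * (v * w) = 2 *\<^sub>R (r * (v * w))" for w
    using vv by (metis mult.assoc mult_scaleR_left)
  have rv': "r * (v * w) = v * (r * w)" for w using lcomm[OF rv] .
  let ?z = "P * y * P - e *\<^sub>R P"
  have vz: "v * ?z = ?z * v"
    by (simp add: algebra_simps vP' yP' PP' vP yP vyc)
  have c1: "v * ?z * v \<in> Pos" using conj_comm[OF v z vz] .
  have c1eq: "v * ?z * v = - ((1/2) *\<^sub>R (P * (v * (v * v)))) - e *\<^sub>R (P * (v * v))"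
    by (simp add: algebra_simps vP' yP' PP' vP yP vy' vy)
  have Pv: "P * v \<in> A" using comm_A[OF P(1) v] vP by simp
  have B: "P * (v * v) \<in> Pos" using sq_Pos[OF Pv] by (simp add: mult.assoc vP' PP')
  have Prc: "(P * v) * r = r * (P * v)" by (simp add: mult.assoc rP' rv' rv)
  have A3: "P * (v * (v * v)) \<in> Pos"
  proof -
    have "(P * v) * r * (P * v) \<in> Pos" using conj_comm[OF Pv r Prc] .
    hence "2 *\<^sub>R ((P * v) * r * (P * v)) \<in> Pos" using pos_scale by simp
    moreover have "2 *\<^sub>R ((P * v) * r * (P * v)) = P * (v * (v * v))"
      by (simp add: mult.assoc vP' PP' vv' rv' rP')
    ultimately show ?thesis by simp
  qed
  have "- ((1/2) *\<^sub>R (P * (v * (v * v)))) \<in> Pos"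
  proof -
    have "v * ?z * v + e *\<^sub>R (P * (v * v)) \<in> Pos" using pos_add[OF c1 pos_scale[OF B]] e by simp
    thus ?thesis using c1eq by simp
  qed
  from pos_scale[OF this, of 2] have "- (P * (v * (v * v))) \<in> Pos" by simp
  hence A0: "P * (v * (v * v)) = 0" using pos_antisym A3 by blast
  hence "- (e *\<^sub>R (P * (v * v))) \<in> Pos" using c1 c1eq by simp
  from pos_scale[OF this, of "1/e"] have "- (P * (v * v)) \<in> Pos" using e by simp
  hence "P * (v * v) = 0" using pos_antisym B by blast
  hence "(P * v) * (P * v) = 0" by (simp add: mult.assoc vP' PP')
  thus ?thesis using sq_zero Pv by blast
qed

lemma proj_Pos: "P \<in> A \<Longrightarrow> P * P = P \<Longrightarrow> P \<in> Pos"
  using sq_Pos[of P] by simp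

lemma bdd_from_proj:
  assumes P: "P \<in> sa_proj A" and Q: "Q \<in> sa_proj A"
    and meet: "sa_is_meet A Pos (1 - P) (1 - Q) 0"
    and x: "x \<in> A" and xP: "x * P = P * x" and xQ: "x * Q = Q * x"
    and e: "0 < e" and hP: "P * x * P - e *\<^sub>R P \<in> Pos" and hQ: "Q * x * Q - e *\<^sub>R Q \<in> Pos"
  shows "x - (e/2) *\<^sub>R 1 \<in> Pos"
proof -
  have PA: "P \<in> A" "P * P = P" and QA: "Q \<in> A" "Q * Q = Q" using P Q unfolding sa_proj_def by auto
  define y where "y = x - (e/2) *\<^sub>R 1"
  have yA: "y \<in> A" unfolding y_def using x sc_A diff_A by blast
  have yP: "y * P = P * y" unfolding y_def using xP by (simp add: algebra_simps)
  have yQ: "y * Q = Q * y" unfolding y_def using xQ by (simp add: algebra_simps)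
  have y2: "y * y \<in> Pos" using sq_Pos yA by blast
  obtain r where r: "r \<in> Pos" "r \<in> sa_bicommutant A (y * y)" "r * r = y * y" using SA5[OF y2] by blast
  have rA: "r \<in> A" using r PosA by blast
  have "y * y * P = y * (P * y)" using yP by (simp add: mult.assoc)
  also have "\<dots> = P * (y * y)" using yP by (simp add: mult.assoc[symmetric])
  finally have "P \<in> sa_commutant A (y * y)" using PA unfolding sa_commutant_def by simp
  hence rP: "r * P = P * r" using r(2) unfolding sa_bicommutant_def by auto
  have "y * y * Q = y * (Q * y)" using yQ by (simp add: mult.assoc)
  also have "\<dots> = Q * (y * y)" using yQ by (simp add: mult.assoc[symmetric])
  finally have "Q \<in> sa_commutant A (y * y)" using QA unfolding sa_commutant_def by simp
  hence rQ: "r * Q = Q * r" using r(2) unfolding sa_bicommutant_def by auto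
  have "y \<in> sa_commutant A (y * y)" using yA unfolding sa_commutant_def by (simp add: mult.assoc)
  hence ry: "r * y = y * r" using r(2) unfolding sa_bicommutant_def by auto
  define v where "v = r - y"
  have vA: "v \<in> A" unfolding v_def using rA yA diff_A by blast
  have vP: "v * P = P * v" unfolding v_def using rP yP by (simp add: algebra_simps)
  have vQ: "v * Q = Q * v" unfolding v_def using rQ yQ by (simp add: algebra_simps)
  have rv: "r * v = v * r" unfolding v_def using ry by (simp add: algebra_simps)
  have vyc: "v * y = y * v" unfolding v_def using ry by (simp add: algebra_simps)
  have vv: "v * v = 2 *\<^sub>R (r * v)" unfolding v_def using ry r(3)
    by (simp add: algebra_simps scaleR_2)
  have "y * v = - (r * v)" unfolding v_def using ry r(3) by (simp add: algebra_simps)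
  hence vy: "y * v = - ((1/2) *\<^sub>R (v * v))" by (simp add: vv)
  have zP: "P * y * P - (e/2) *\<^sub>R P \<in> Pos"
  proof -
    have "P * y * P - (e/2) *\<^sub>R P = P * x * P - e *\<^sub>R P" unfolding y_def using PA(2)
      by (simp add: algebra_simps scaleR_2[symmetric] flip: scaleR_add_left)
    thus ?thesis using hP by simp
  qed
  have zQ: "Q * y * Q - (e/2) *\<^sub>R Q \<in> Pos"
  proof -
    have "Q * y * Q - (e/2) *\<^sub>R Q = Q * x * Q - e *\<^sub>R Q" unfolding y_def using QA(2)
      by (simp add: algebra_simps scaleR_2[symmetric] flip: scaleR_add_left)
    thus ?thesis using hQ by simp
  qed
  have e2: "0 < e/2" using e by simp
  have Pv: "P * v = 0" using aux_Pv[OF PA vA yA r(1) vP yP rP rv vv vy vyc e2 zP] .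
  have Qv: "Q * v = 0" using aux_Pv[OF QA vA yA r(1) vQ yQ rQ rv vv vy vyc e2 zQ] .
  obtain E where E: "E \<in> A" "E * E = E" "\<forall>b\<in>A. v * b = 0 \<longleftrightarrow> E * b = 0" using SA6[OF vA] by blast
  have EP: "E * P = 0" using E(3) PA(1) Pv vP by simp
  have EQ: "E * Q = 0" using E(3) QA(1) Qv vQ by simp
  have PE: "P * E = 0" using SA4[OF E(1) proj_Pos[OF PA]] EP by simp
  have QE: "Q * E = 0" using SA4[OF E(1) proj_Pos[OF QA]] EQ by simp
  have le1: "sa_le Pos E (1 - P)"
  proof -
    have "(1 - P - E) * (1 - P - E) = 1 - P - E" using PA(2) E(2) PE EP by (simp add: algebra_simps)
    moreover have "1 - P - E \<in> A" using diff_A one_A PA E by blast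
    ultimately show ?thesis unfolding sa_le_def using sq_Pos[of "1 - P - E"] by (simp add: diff_diff_eq)
  qed
  have le2: "sa_le Pos E (1 - Q)"
  proof -
    have "(1 - Q - E) * (1 - Q - E) = 1 - Q - E" using QA(2) E(2) QE EQ by (simp add: algebra_simps)
    moreover have "1 - Q - E \<in> A" using diff_A one_A QA E by blast
    ultimately show ?thesis unfolding sa_le_def using sq_Pos[of "1 - Q - E"] by (simp add: diff_diff_eq)
  qed
  have "E \<in> sa_proj A" using E unfolding sa_proj_def by auto
  hence "sa_le Pos E 0" using meet le1 le2 unfolding sa_is_meet_def by blast
  hence "- E \<in> Pos" unfolding sa_le_def by simp
  hence "E = 0" using pos_antisym proj_Pos E by blast
  hence "v * 1 = 0" using E(3) one_A by (metis mult_zero_left)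
  hence "y = r" unfolding v_def by simp
  thus ?thesis using r(1) y_def by simp
qed

lemma one_case:
  assumes P: "p \<in> sa_proj A" and Q: "q \<in> sa_proj A"
    and meet: "sa_is_meet A Pos (1 - p) (1 - q) 0"
    and inv: "sa_invertible A ((1 - p) + (1 - q))"
  shows "sa_invertible A (p + q)"
proof -
  have pA: "p \<in> A" "p * p = p" and qA: "q \<in> A" "q * q = q" using P Q unfolding sa_proj_def by auto
  have pp: "p * (p * z) = p * z" for z using pA(2) by (simp add: mult.assoc[symmetric])
  have qq: "q * (q * z) = q * z" for z using qA(2) by (simp add: mult.assoc[symmetric])
  define a where "a = (1 - p) + (1 - q)"
  have aA: "a \<in> A" unfolding a_def using pA qA one_A diff_A add_A by blast
  have "(1 - p) * (1 - p) = 1 - p" using pA(2) by (simp add: algebra_simps)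
  hence p'P: "1 - p \<in> Pos" using proj_Pos diff_A one_A pA by blast
  have "(1 - q) * (1 - q) = 1 - q" using qA(2) by (simp add: algebra_simps)
  hence q'P: "1 - q \<in> Pos" using proj_Pos diff_A one_A qA by blast
  have aP: "a \<in> Pos" unfolding a_def using pos_add p'P q'P by blast
  obtain e where e: "0 < e" "a - e *\<^sub>R 1 \<in> Pos" using pos_inv_bdd[OF aP] inv a_def by blast
  define x where "x = (p - q) * (p - q)"
  have xA: "x \<in> A" unfolding x_def using PosA sq_Pos diff_A pA qA by blast
  have xp1: "x * p = p - p * q * p" unfolding x_def by (simp add: algebra_simps pA qA pp qq)
  have xp2: "p * x = p - p * q * p" unfolding x_def by (simp add: algebra_simps pA qA pp qq)
  have xq1: "x * q = q - q * p * q" unfolding x_def by (simp add: algebra_simps pA qA pp qq)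
  have xq2: "q * x = q - q * p * q" unfolding x_def by (simp add: algebra_simps pA qA pp qq)
  have hP: "p * x * p - e *\<^sub>R p \<in> Pos"
  proof -
    have "p * (a - e *\<^sub>R 1) * p \<in> Pos" using SA3[OF proj_Pos[OF pA] e(2)] .
    moreover have "p * (a - e *\<^sub>R 1) * p = p * x * p - e *\<^sub>R p"
    proof -
      have "p * x * p = (p - p * q * p) * p" using xp2 by simp
      also have "\<dots> = p - p * q * p" by (simp add: algebra_simps pA qA pp qq mult.assoc)
      finally have "p * x * p = p - p * q * p" .
      moreover have "p * a * p = p - p * q * p" unfolding a_def
        by (simp add: algebra_simps pA qA pp qq mult_2 mult_2_right)
      moreover have "p * (a - e *\<^sub>R 1) * p = p * a * p - e *\<^sub>R p"
        by (simp add: algebra_simps pA qA)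
      ultimately show ?thesis by simp
    qed
    ultimately show ?thesis by simp
  qed
  have hQ: "q * x * q - e *\<^sub>R q \<in> Pos"
  proof -
    have "q * (a - e *\<^sub>R 1) * q \<in> Pos" using SA3[OF proj_Pos[OF qA] e(2)] .
    moreover have "q * (a - e *\<^sub>R 1) * q = q * x * q - e *\<^sub>R q"
    proof -
      have "q * x * q = (q - q * p * q) * q" using xq2 by simp
      also have "\<dots> = q - q * p * q" by (simp add: algebra_simps pA qA pp qq mult.assoc)
      finally have "q * x * q = q - q * p * q" .
      moreover have "q * a * q = q - q * p * q" unfolding a_def
        by (simp add: algebra_simps pA qA pp qq mult_2 mult_2_right)
      moreover have "q * (a - e *\<^sub>R 1) * q = q * a * q - e *\<^sub>R q"
        by (simp add: algebra_simps pA qA)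
      ultimately show ?thesis by simp
    qed
    ultimately show ?thesis by simp
  qed
  have "x - (e/2) *\<^sub>R 1 \<in> Pos"
    using bdd_from_proj[OF P Q meet xA _ _ e(1) hP hQ] xp1 xp2 xq1 xq2 by simp
  hence xinv: "sa_invertible A x" using bdd_below_inv[OF xA, of "e/2"] e(1) by simp
  have pqA: "p + q \<in> A" using add_A pA qA by blast
  have xeq: "x = a * (p + q)" unfolding x_def a_def by (simp add: algebra_simps pA qA mult_2)
  have comm: "a * (p + q) = (p + q) * a" unfolding a_def by (simp add: algebra_simps mult_2 mult_2_right)
  show ?thesis using prod_inv[OF aA pqA comm] xinv xeq by simp
qed

lemma proj_compl: "p \<in> sa_proj A \<Longrightarrow> 1 - p \<in> sa_proj A"
  unfolding sa_proj_def using diff_A one_A by (auto simp: algebra_simps)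

lemma sym_inv:
  assumes P: "p \<in> sa_proj A" and Q: "q \<in> sa_proj A"
    and m1: "sa_is_meet A Pos p q 0" and m2: "sa_is_meet A Pos (1 - p) (1 - q) 0"
    and inv: "sa_invertible A (p + q - 1 - m *\<^sub>R 1)"
  shows "sa_invertible A (p + q - 1 + m *\<^sub>R 1)"
proof -
  have pA: "p \<in> A" "p * p = p" and qA: "q \<in> A" "q * q = q" using P Q unfolding sa_proj_def by auto
  have pp: "p * (p * z) = p * z" for z using pA(2) by (simp add: mult.assoc[symmetric])
  have qq: "q * (q * z) = q * z" for z using qA(2) by (simp add: mult.assoc[symmetric])
  define b where "b = p + q - 1"
  have bA: "b \<in> A" unfolding b_def using pA qA one_A add_A diff_A by blast
  consider "m = 1" | "m = -1" | "m \<noteq> 1" "m \<noteq> -1" by blast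
  then show ?thesis
  proof cases
    case 1
    have eq: "p + q - 1 - m *\<^sub>R 1 = - ((1 - p) + (1 - q))" using 1 by (simp add: algebra_simps)
    have "sa_invertible A ((1 - p) + (1 - q))" using neg_inv[OF inv] unfolding eq minus_minus .
    hence "sa_invertible A (p + q)" using one_case[OF P Q m2] by simp
    thus ?thesis using 1 by simp
  next
    case 2
    have "sa_invertible A (p + q)" using inv 2 by simp
    hence "sa_invertible A ((1 - (1 - p)) + (1 - (1 - q)))" by simp
    hence "sa_invertible A ((1 - p) + (1 - q))"
      using one_case[OF proj_compl[OF P] proj_compl[OF Q]] m1 by simp
    hence i2: "sa_invertible A (- ((1 - p) + (1 - q)))" using neg_inv by blast
    have eq: "- ((1 - p) + (1 - q)) = p + q - 1 + m *\<^sub>R 1" using 2 by (simp add: algebra_simps)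
    show ?thesis using i2 unfolding eq .
  next
    case 3
    obtain y where y: "y \<in> A" "(b - m *\<^sub>R 1) * y = 1" "y * (b - m *\<^sub>R 1) = 1"
      using inv unfolding sa_invertible_def b_def by blast
    define d where "d = p - q"
    have dA: "d \<in> A" unfolding d_def using diff_A pA qA by blast
    have db1: "d * b = p * q - q * p" unfolding d_def b_def by (simp add: algebra_simps pA qA)
    have db2: "b * d = - (p * q - q * p)" unfolding d_def b_def by (simp add: algebra_simps pA qA)
    have dd1: "d * d = p + q - p * q - q * p" unfolding d_def by (simp add: algebra_simps pA qA)
    have dd2: "b * b = 1 - p - q + p * q + q * p" unfolding b_def by (simp add: algebra_simps pA qA)
    have dd: "b * b + d * d = 1" unfolding dd1 dd2 by simp
    have h1: "(b + m *\<^sub>R 1) * d = - (d * (b - m *\<^sub>R 1))"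
    proof -
      have "(b + m *\<^sub>R 1) * d = b * d + m *\<^sub>R d" by (simp add: distrib_right)
      moreover have "d * (b - m *\<^sub>R 1) = d * b - m *\<^sub>R d" by (simp add: right_diff_distrib)
      ultimately show ?thesis unfolding db1 db2 by simp
    qed
    have h2: "d * (b + m *\<^sub>R 1) = - ((b - m *\<^sub>R 1) * d)"
    proof -
      have "d * (b + m *\<^sub>R 1) = d * b + m *\<^sub>R d" by (simp add: distrib_left)
      moreover have "(b - m *\<^sub>R 1) * d = b * d - m *\<^sub>R d" by (simp add: left_diff_distrib)
      ultimately show ?thesis unfolding db1 db2 by simp
    qed
    have L1: "(b + m *\<^sub>R 1) * (d * y * d) = - (d * d)"
    proof -
      have "(b + m *\<^sub>R 1) * (d * y * d) = ((b + m *\<^sub>R 1) * d) * y * d" by (simp add: mult.assoc)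
      also have "\<dots> = - (d * ((b - m *\<^sub>R 1) * y) * d)" unfolding h1 by (simp add: mult.assoc)
      finally show ?thesis using y(2) by simp
    qed
    have L2: "(d * y * d) * (b + m *\<^sub>R 1) = - (d * d)"
    proof -
      have "(d * y * d) * (b + m *\<^sub>R 1) = d * y * (d * (b + m *\<^sub>R 1))" by (simp add: mult.assoc)
      also have "\<dots> = - (d * (y * (b - m *\<^sub>R 1)) * d)" unfolding h2 by (simp add: mult.assoc)
      finally show ?thesis using y(3) by simp
    qed
    have bb: "(b + m *\<^sub>R 1) * (b - m *\<^sub>R 1) = b * b - (m * m) *\<^sub>R 1"
      by (simp add: algebra_simps)
    have bb2: "(b - m *\<^sub>R 1) * (b + m *\<^sub>R 1) = b * b - (m * m) *\<^sub>R 1"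
      by (simp add: algebra_simps)
    have nz: "1 - m * m \<noteq> 0"
    proof
      assume "1 - m * m = 0"
      hence "(1 - m) * (1 + m) = 0" by (simp add: algebra_simps)
      hence "1 - m = 0 \<or> 1 + m = 0" by simp
      thus False using 3 by auto
    qed
    define W where "W = (1 / (1 - m * m)) *\<^sub>R (b - m *\<^sub>R 1 - d * y * d)"
    have WA: "W \<in> A" unfolding W_def
      by (intro scale_A diff_A bA sc_A triple_A dA y(1))
    have "(b + m *\<^sub>R 1) * (b - m *\<^sub>R 1 - d * y * d) = (1 - m * m) *\<^sub>R 1"
    proof -
      have "(b + m *\<^sub>R 1) * (b - m *\<^sub>R 1 - d * y * d)
          = (b + m *\<^sub>R 1) * (b - m *\<^sub>R 1) - (b + m *\<^sub>R 1) * (d * y * d)"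
        by (simp add: right_diff_distrib)
      also have "\<dots> = b * b + d * d - (m * m) *\<^sub>R 1" unfolding bb L1 by simp
      also have "\<dots> = (1 - m * m) *\<^sub>R 1" using dd by (simp add: scaleR_diff_left)
      finally show ?thesis .
    qed
    hence W1: "(b + m *\<^sub>R 1) * W = 1" unfolding W_def using nz by simp
    have "(b - m *\<^sub>R 1 - d * y * d) * (b + m *\<^sub>R 1) = (1 - m * m) *\<^sub>R 1"
    proof -
      have "(b - m *\<^sub>R 1 - d * y * d) * (b + m *\<^sub>R 1)
          = (b - m *\<^sub>R 1) * (b + m *\<^sub>R 1) - (d * y * d) * (b + m *\<^sub>R 1)"
        by (simp add: left_diff_distrib)
      also have "\<dots> = b * b + d * d - (m * m) *\<^sub>R 1" unfolding bb2 L2 by simp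
      also have "\<dots> = (1 - m * m) *\<^sub>R 1" using dd by (simp add: scaleR_diff_left)
      finally show ?thesis .
    qed
    hence W2: "W * (b + m *\<^sub>R 1) = 1" unfolding W_def using nz by simp
    show ?thesis using WA W1 W2 unfolding sa_invertible_def b_def by blast
  qed
qed

lemma key:
  assumes P: "p \<in> sa_proj A" and Q: "q \<in> sa_proj A"
    and m1: "sa_is_meet A Pos p q 0" and m2: "sa_is_meet A Pos (1 - p) (1 - q) 0"
    and c: "c = sa_sqrt Pos (p * q * p + (1 - p) * (1 - q) * (1 - p))"
  shows "sa_invertible A (p + q - l *\<^sub>R 1) \<longleftrightarrow>
         sa_invertible A (c - (l - 1) *\<^sub>R 1) \<and> sa_invertible A (c - (1 - l) *\<^sub>R 1)"
proof -
  have pA: "p \<in> A" "p * p = p" and qA: "q \<in> A" "q * q = q" using P Q unfolding sa_proj_def by auto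
  have pp: "p * (p * z) = p * z" for z using pA(2) by (simp add: mult.assoc[symmetric])
  define b where "b = p + q - 1"
  have bA: "b \<in> A" unfolding b_def using pA qA one_A add_A diff_A by blast
  have e1: "p * q * p + (1 - p) * (1 - q) * (1 - p) = 1 - p - q + p * q + q * p"
    by (simp add: algebra_simps pA qA pp)
  have e2: "b * b = 1 - p - q + p * q + q * p" unfolding b_def by (simp add: algebra_simps pA qA)
  have cdef: "c = sa_sqrt Pos (b * b)" using c e1 e2 by simp
  have bbP: "b * b \<in> Pos" using sq_Pos bA by blast
  note cp = sqrt_prop[OF bbP, folded cdef]
  have cA: "c \<in> A" using cp(1) PosA by blast
  have "b \<in> sa_commutant A (b * b)" using bA unfolding sa_commutant_def by (simp add: mult.assoc)
  hence cb: "c * b = b * c" using cp(3) unfolding sa_bicommutant_def by auto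
  define m where "m = l - 1"
  have eq0: "p + q - l *\<^sub>R 1 = b - m *\<^sub>R 1" unfolding b_def m_def by (simp add: algebra_simps)
  have eqc: "c - (1 - l) *\<^sub>R 1 = c + m *\<^sub>R 1" unfolding m_def by (simp add: algebra_simps)
  have bm: "b - m *\<^sub>R 1 \<in> A" "b + m *\<^sub>R 1 \<in> A" using bA sc_A diff_A add_A by auto
  have cm: "c - m *\<^sub>R 1 \<in> A" "c + m *\<^sub>R 1 \<in> A" using cA sc_A diff_A add_A by auto
  have com1: "(b - m *\<^sub>R 1) * (b + m *\<^sub>R 1) = (b + m *\<^sub>R 1) * (b - m *\<^sub>R 1)" by (simp add: algebra_simps)
  have com2: "(c - m *\<^sub>R 1) * (c + m *\<^sub>R 1) = (c + m *\<^sub>R 1) * (c - m *\<^sub>R 1)" by (simp add: algebra_simps)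
  have prodeq: "(b - m *\<^sub>R 1) * (b + m *\<^sub>R 1) = (c - m *\<^sub>R 1) * (c + m *\<^sub>R 1)"
  proof -
    have "(b - m *\<^sub>R 1) * (b + m *\<^sub>R 1) = b * b - (m * m) *\<^sub>R 1" by (simp add: algebra_simps)
    moreover have "(c - m *\<^sub>R 1) * (c + m *\<^sub>R 1) = c * c - (m * m) *\<^sub>R 1" by (simp add: algebra_simps)
    ultimately show ?thesis using cp(2) by simp
  qed
  have symm: "sa_invertible A (b - m *\<^sub>R 1) \<longleftrightarrow> sa_invertible A (b + m *\<^sub>R 1)"
  proof
    assume "sa_invertible A (b - m *\<^sub>R 1)"
    thus "sa_invertible A (b + m *\<^sub>R 1)" using sym_inv[OF P Q m1 m2, of m] unfolding b_def by simp
  next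
    assume h: "sa_invertible A (b + m *\<^sub>R 1)"
    have "b + m *\<^sub>R 1 = b - (- m) *\<^sub>R 1" "b - m *\<^sub>R 1 = b + (- m) *\<^sub>R 1" by simp_all
    thus "sa_invertible A (b - m *\<^sub>R 1)" using sym_inv[OF P Q m1 m2, of "- m"] h unfolding b_def by simp
  qed
  have "sa_invertible A (b - m *\<^sub>R 1) \<longleftrightarrow> sa_invertible A ((b - m *\<^sub>R 1) * (b + m *\<^sub>R 1))"
    using prod_inv[OF bm com1] symm by blast
  also have "\<dots> \<longleftrightarrow> sa_invertible A (c - m *\<^sub>R 1) \<and> sa_invertible A (c + m *\<^sub>R 1)"
    unfolding prodeq using prod_inv[OF cm com2] .
  finally show ?thesis unfolding eq0 eqc m_def .
qed

end

theorem theorem8p1: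
  fixes A Pos :: "'a::real_algebra_1 set" and p q c :: 'a
  assumes "synaptic_algebra A Pos"
    and "p \<in> sa_proj A" and "q \<in> sa_proj A"
    and "sa_is_meet A Pos p q 0"
    and "sa_is_meet A Pos p (1 - q) 0"
    and "sa_is_meet A Pos (1 - p) q 0"
    and "sa_is_meet A Pos (1 - p) (1 - q) 0"
    and "c = sa_sqrt Pos (p * q * p + (1 - p) * (1 - q) * (1 - p))"
  shows "sa_spectrum A (p + q) =
           {1 + g | g. g \<in> sa_spectrum A c} \<union> {1 - g | g. g \<in> sa_spectrum A c}"
proof -
  interpret SA A Pos using assms(1) by unfold_locales
  have k: "sa_invertible A (p + q - l *\<^sub>R 1) \<longleftrightarrow>
         sa_invertible A (c - (l - 1) *\<^sub>R 1) \<and> sa_invertible A (c - (1 - l) *\<^sub>R 1)" for l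
    using key[OF assms(2,3,4,7,8)] .
  show ?thesis
  proof (rule set_eqI)
    fix l :: real
    have "l \<in> sa_spectrum A (p + q) \<longleftrightarrow> (l - 1) \<in> sa_spectrum A c \<or> (1 - l) \<in> sa_spectrum A c"
      unfolding sa_spectrum_def using k[of l] by auto
    also have "\<dots> \<longleftrightarrow> l \<in> {1 + g | g. g \<in> sa_spectrum A c} \<union> {1 - g | g. g \<in> sa_spectrum A c}"
    proof
      assume "(l - 1) \<in> sa_spectrum A c \<or> (1 - l) \<in> sa_spectrum A c"
      thus "l \<in> {1 + g | g. g \<in> sa_spectrum A c} \<union> {1 - g | g. g \<in> sa_spectrum A c}"
      proof
        assume "l - 1 \<in> sa_spectrum A c"
        hence "l \<in> {1 + g | g. g \<in> sa_spectrum A c}" by (intro CollectI exI[of _ "l - 1"]) simp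
        thus ?thesis by blast
      next
        assume "1 - l \<in> sa_spectrum A c"
        hence "l \<in> {1 - g | g. g \<in> sa_spectrum A c}" by (intro CollectI exI[of _ "1 - l"]) simp
        thus ?thesis by blast
      qed
    next
      assume "l \<in> {1 + g | g. g \<in> sa_spectrum A c} \<union> {1 - g | g. g \<in> sa_spectrum A c}"
      thus "(l - 1) \<in> sa_spectrum A c \<or> (1 - l) \<in> sa_spectrum A c" by auto
    qed
    finally show "l \<in> sa_spectrum A (p + q) \<longleftrightarrow>
        l \<in> {1 + g | g. g \<in> sa_spectrum A c} \<union> {1 - g | g. g \<in> sa_spectrum A c}" .
  qed
qed

end
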